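(* Consider the two-layer multi-item order fulfillment problem described in the context with time-invariant variable costs, any $K\ge 1$, and any given fixed costs $f_0\ge0$, $f_1,\dots,f_K>0$. Then every online fulfillment policy $\mathrm{ALG}$ (deterministic or randomized) satisfies \[\mathfrak R_{\mathrm{inv}}(\mathrm{ALG})\ge\frac{f_0+\sum_{k\in[K]}f_k}{\min_{k\in[K]}f_k}.\]
   Context: Problem. $n$ items, $K$ FDCs indexed $k\in[K]$, an RDC indexed $k=0$ with unlimited inventory. FDC $k$ initially holds $I_{k,0}^i\ge0$ units of item $i$, never replenished. In periods $t=1,\dots,T$ an order $\boldsymbol S_t=(S_t^i)_i$ of nonnegative integers arrives; the policy must immediately and irrevocably choose $m_{k,t}^i\ge0$ with $\sum_{k=0}^Km_{k,t}^i=S_t^i$ and $m_{k,t}^i\le I_{k,t-1}^i$ ($k\in[K]$), $I_{k,t}^i=I_{k,0}^i-\sum_{\tau\le t}m_{k,\tau}^i$. Period cost $\sum_{k=0}^K[f_k\mathbb{I}(\sum_im_{k,t}^i>0)+\sum_ic_{k,t}^im_{k,t}^i]$; total cost is the sum. An online policy (possibly randomized) decides in period $t$ using only fixed costs, initial inventories and orders/variable costs up to $t$. $\mathrm{ALG}(I)$: (expected) total cost on instance $I$; $\mathrm{OPT}(I)$: offline optimal total cost. $\mathfrak R_{\mathrm{inv}}(\mathrm{ALG})$ is the supremum of $\mathrm{ALG}(I)/\mathrm{OPT}(I)$ over all $n,T$, initial inventories, nonnegative time-invariant variable costs $c_{k,t}^i=c_k^i$ and order sequences. *)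

theory Defs
  imports "HOL-Probability.Probability"
begin

text \<open>Facilities are indexed by k = 0 (the RDC, unlimited inventory) and k = 1..K (the FDCs);
items are indexed by i < n; periods by list positions t < T (position t is period t+1).

An order is a function nat => nat (item => quantity).  A decision for one period is
m :: nat => nat => nat with m k i = quantity of item i shipped from facility k.
Initial inventories I0 k i and variable costs c k i (time invariant).\<close>

type_synonym order = "nat \<Rightarrow> nat"
type_synonym decision = "nat \<Rightarrow> nat \<Rightarrow> nat"

text \<open>A deterministic online policy: in each period it sees the number of items n, the initial
inventories, the (time-invariant) variable costs and the list of orders received so far
(including the current one), and outputs the current period's decision.  The fixed costs
and K are fixed in advance, so the policy may depend on them implicitly.\<close>
type_synonym policy = "nat \<Rightarrow> (nat \<Rightarrow> nat \<Rightarrow> nat) \<Rightarrow> (nat \<Rightarrow> nat \<Rightarrow> real) \<Rightarrow> order list \<Rightarrow> decision"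

definition valid_inst :: "nat \<Rightarrow> nat \<Rightarrow> (nat \<Rightarrow> nat \<Rightarrow> nat) \<Rightarrow> (nat \<Rightarrow> nat \<Rightarrow> real) \<Rightarrow> order list \<Rightarrow> bool" where
  "valid_inst K n I0 c S \<longleftrightarrow>
     (\<forall>k i. (k = 0 \<or> K < k \<or> n \<le> i) \<longrightarrow> I0 k i = 0) \<and>
     (\<forall>k i. (K < k \<or> n \<le> i) \<longrightarrow> c k i = 0) \<and>
     (\<forall>k\<le>K. \<forall>i<n. 0 \<le> c k i) \<and>
     (\<forall>s\<in>set S. \<forall>i. n \<le> i \<longrightarrow> s i = 0)"

definition feasible :: "nat \<Rightarrow> nat \<Rightarrow> (nat \<Rightarrow> nat \<Rightarrow> nat) \<Rightarrow> order list \<Rightarrow> (nat \<Rightarrow> decision) \<Rightarrow> bool" where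
  "feasible K n I0 S m \<longleftrightarrow>
     (\<forall>t<length S. \<forall>i<n.
        (\<Sum>k\<le>K. m t k i) = (S ! t) i \<and>
        (\<forall>k\<in>{1..K}. (\<Sum>\<tau>\<le>t. m \<tau> k i) \<le> I0 k i))"

definition total_cost :: "nat \<Rightarrow> (nat \<Rightarrow> real) \<Rightarrow> (nat \<Rightarrow> nat \<Rightarrow> real) \<Rightarrow> nat \<Rightarrow> nat \<Rightarrow> (nat \<Rightarrow> decision) \<Rightarrow> real" where
  "total_cost K f c n T m =
     (\<Sum>t<T. \<Sum>k\<le>K. f k * (if (\<Sum>i<n. m t k i) > 0 then 1 else 0)
                     + (\<Sum>i<n. c k i * real (m t k i)))"

definition OPT :: "nat \<Rightarrow> (nat \<Rightarrow> real) \<Rightarrow> nat \<Rightarrow> (nat \<Rightarrow> nat \<Rightarrow> nat) \<Rightarrow> (nat \<Rightarrow> nat \<Rightarrow> real) \<Rightarrow> order list \<Rightarrow> real" where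
  "OPT K f n I0 c S = Inf {total_cost K f c n (length S) m | m. feasible K n I0 S m}"

definition run :: "policy \<Rightarrow> nat \<Rightarrow> (nat \<Rightarrow> nat \<Rightarrow> nat) \<Rightarrow> (nat \<Rightarrow> nat \<Rightarrow> real) \<Rightarrow> order list \<Rightarrow> nat \<Rightarrow> decision" where
  "run pol n I0 c S = (\<lambda>t. pol n I0 c (take (Suc t) S))"

definition pol_cost :: "nat \<Rightarrow> (nat \<Rightarrow> real) \<Rightarrow> policy \<Rightarrow> nat \<Rightarrow> (nat \<Rightarrow> nat \<Rightarrow> nat) \<Rightarrow> (nat \<Rightarrow> nat \<Rightarrow> real) \<Rightarrow> order list \<Rightarrow> real" where
  "pol_cost K f pol n I0 c S = total_cost K f c n (length S) (run pol n I0 c S)"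

text \<open>Deterministic policies are the case of a one-point space.\<close>
definition randomized_policy :: "nat \<Rightarrow> (nat \<Rightarrow> real) \<Rightarrow> 'w measure \<Rightarrow> ('w \<Rightarrow> policy) \<Rightarrow> bool" where
  "randomized_policy K f M pol \<longleftrightarrow>
     prob_space M \<and>
     (\<forall>\<omega>\<in>space M. \<forall>n I0 c S. valid_inst K n I0 c S \<longrightarrow> feasible K n I0 S (run (pol \<omega>) n I0 c S)) \<and>
     (\<forall>n I0 c S. valid_inst K n I0 c S \<longrightarrow>
        (\<lambda>\<omega>. pol_cost K f (pol \<omega>) n I0 c S) \<in> borel_measurable M)"

definition ALG :: "nat \<Rightarrow> (nat \<Rightarrow> real) \<Rightarrow> 'w measure \<Rightarrow> ('w \<Rightarrow> policy) \<Rightarrow> nat \<Rightarrow> (nat \<Rightarrow> nat \<Rightarrow> nat) \<Rightarrow> (nat \<Rightarrow> nat \<Rightarrow> real) \<Rightarrow> order list \<Rightarrow> real" where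
  "ALG K f M pol n I0 c S = (\<integral>\<omega>. pol_cost K f (pol \<omega>) n I0 c S \<partial>M)"

definition ratio :: "real \<Rightarrow> real \<Rightarrow> ereal" where
  "ratio a b = (if b = 0 then (if a = 0 then 0 else \<infinity>) else ereal (a / b))"

definition R_inv :: "nat \<Rightarrow> (nat \<Rightarrow> real) \<Rightarrow> 'w measure \<Rightarrow> ('w \<Rightarrow> policy) \<Rightarrow> ereal" where
  "R_inv K f M pol =
     (SUP x \<in> {(n, I0, c, S). valid_inst K n I0 c S}.
        (case x of (n, I0, c, S) \<Rightarrow> ratio (ALG K f M pol n I0 c S) (OPT K f n I0 c S)))"

end

theory Submission
  imports Defs
begin

locale cx =
  fixes K ks L :: nat and f :: "nat \<Rightarrow> real"
  assumes ks1: "1 \<le> ks" and ksK: "ks \<le> K" and L1: "1 \<le> L"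
    and fnn: "\<And>k. k \<le> K \<Longrightarrow> 0 \<le> f k"
begin

definition "M = L*L"
definition "Q = (K+1)*M"
definition "nn = 1 + Q*L"
definition "FF = (\<Sum>k\<le>K. f k)"
definition "gr i = (i - 1) mod (K+1)"
definition "sl i = ((i - 1) div (K+1)) mod M"
definition "bl i = (i - 1) div Q"
definition "enc gg tt ss = 1 + Q*tt + (K+1)* ss + gg"

lemma M1: "1 \<le> M" using L1 by (simp add: M_def)
lemma Qpos: "0 < Q" using M1 by (simp add: Q_def)

lemma enc_dec:
  assumes "g \<le> K" "s < M"
  shows "gr (enc g t s) = g" "sl (enc g t s) = s" "bl (enc g t s) = t"
proof -
  have e: "enc g t s - 1 = (K+1)*(M*t + s) + g"
    by (simp add: enc_def Q_def algebra_simps)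
  have g1: "g < K+1" using assms by simp
  have e2: "enc g t s - 1 = g + (M*t + s)*(K+1)" using e by (simp add: algebra_simps)
  show "gr (enc g t s) = g" unfolding gr_def e2 using g1 by (simp only: mod_mult_self1 mod_less)
  have "(enc g t s - 1) div (K+1) = M*t + s" unfolding e2 using g1
    by (simp only: div_mult_self1[of "K+1"] div_less)
  then show "sl (enc g t s) = s" unfolding sl_def using assms by simp
  have lt: "(K+1)* s + g < Q"
  proof -
    have "(K+1)* s + g < (K+1)*(s+1)" using g1 by simp
    also have "\<dots> \<le> (K+1)*M" using assms by (intro mult_le_mono2) simp
    finally show ?thesis by (simp add: Q_def)
  qed
  have "enc g t s - 1 = Q*t + ((K+1)* s + g)" by (simp add: enc_def)
  then show "bl (enc g t s) = t" unfolding bl_def using lt Qpos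
    by (simp add: div_add1_eq[of "Q*t"] )
qed

lemma enc_range:
  assumes "g \<le> K" "s < M" "t < L"
  shows "1 \<le> enc g t s" "enc g t s < nn"
proof -
  show "1 \<le> enc g t s" by (simp add: enc_def)
  have g1: "g < K+1" using assms by simp
  have lt: "(K+1)* s + g < Q"
  proof -
    have "(K+1)* s + g < (K+1)*(s+1)" using g1 by simp
    also have "\<dots> \<le> (K+1)*M" using assms by (intro mult_le_mono2) simp
    finally show ?thesis by (simp add: Q_def)
  qed
  have "Q*t + Q \<le> Q*L" using assms by (metis Suc_leI add.commute mult_Suc_right mult_le_mono2)
  then show "enc g t s < nn" using lt by (simp add: enc_def nn_def)
qed

lemma enc_inj:
  assumes "g \<le> K" "s < M" "g' \<le> K" "s' < M" "enc g t s = enc g' t s'"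
  shows "g = g'" "s = s'"
  using enc_dec[OF assms(1,2), of t] enc_dec[OF assms(3,4), of t] assms(5) by metis+

lemma gr_le: "gr i \<le> K" by (simp add: gr_def)
lemma sl_lt: "sl i < M" using M1 by (simp add: sl_def)
lemma bl_lt: assumes "1 \<le> i" "i < nn" shows "bl i < L"
proof -
  have "i - 1 < Q*L" using assms by (simp add: nn_def)
  then show ?thesis by (simp add: bl_def Qpos less_mult_imp_div_less mult.commute)
qed

definition I0 :: "nat \<Rightarrow> nat \<Rightarrow> nat" where "I0 k i = (if 1 \<le> k \<and> k \<le> K \<and> i < nn then
   (if i = 0 then (if k = ks then L + M else 0)
    else if gr i \<noteq> ks \<and> (k = ks \<or> k = gr i) then 1 else 0) else 0)"

definition cc :: "nat \<Rightarrow> nat \<Rightarrow> real" where "cc k i = (if k \<le> K \<and> i < nn then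
   (if i = 0 then (if k = 0 then FF else 0)
    else if gr i = ks then 0
    else if k = 0 then (if gr i = 0 then f 0 / real L else FF)
    else if k = gr i then f k / real L else 0) else 0)"

definition ord :: "nat \<Rightarrow> nat \<Rightarrow> nat \<Rightarrow> nat" where "ord j t i = (if i = 0 then 1 else
   if i < nn \<and> gr i \<noteq> ks \<and> (if t < L then bl i = t else bl i = j \<and> sl i = t - L) then 1 else 0)"

definition SS :: "nat \<Rightarrow> order list" where "SS j = map (ord j) [0..<L+M]"

lemma nn_pos: "0 < nn" by (simp add: nn_def)

lemma FF_nn: "0 \<le> FF" unfolding FF_def by (intro sum_nonneg fnn) simp

lemma f_le_FF: "k \<le> K \<Longrightarrow> f k \<le> FF"
  unfolding FF_def by (rule member_le_sum) (auto intro: fnn)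

lemma cc_nn: "0 \<le> cc k i"
  unfolding cc_def using FF_nn fnn gr_le by auto

lemma SS_len: "length (SS j) = L + M" by (simp add: SS_def)
lemma SS_nth: "t < L + M \<Longrightarrow> SS j ! t = ord j t" by (simp add: SS_def)

lemma valid: "valid_inst K nn I0 cc (SS j)"
  unfolding valid_inst_def
proof (intro conjI allI impI ballI)
  fix k i assume "k = 0 \<or> K < k \<or> nn \<le> i" then show "I0 k i = 0" by (auto simp: I0_def)
next
  fix k i assume "K < k \<or> nn \<le> i" then show "cc k i = 0" by (auto simp: cc_def)
next
  fix k i assume "k \<le> K" "i < nn" then show "0 \<le> cc k i" using cc_nn by blast
next
  fix s i assume "s \<in> set (SS j)" "nn \<le> i"
  then show "s i = 0" using nn_pos by (auto simp: SS_def ord_def)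
qed

definition ind :: "(nat \<Rightarrow> decision) \<Rightarrow> nat \<Rightarrow> nat \<Rightarrow> real" where "ind m t k = (if (\<Sum>i<nn. m t k i) > 0 then 1 else (0::real))"
definition W :: "(nat \<Rightarrow> decision) \<Rightarrow> nat \<Rightarrow> nat \<Rightarrow> real" where "W m t i = (\<Sum>k\<le>K. cc k i * real (m t k i))"
definition P :: "(nat \<Rightarrow> decision) \<Rightarrow> nat \<Rightarrow> real" where "P m t = (\<Sum>k\<le>K. f k * ind m t k + (\<Sum>i<nn. cc k i * real (m t k i)))"

lemma tc_eq: "total_cost K f cc nn T m = (\<Sum>t<T. P m t)"
  unfolding total_cost_def P_def ind_def by simp

lemma P_eq: "P m t = (\<Sum>k\<le>K. f k * ind m t k) + (\<Sum>i<nn. W m t i)"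
  unfolding P_def W_def sum.distrib by (simp add: sum.swap[of _ "{..<nn}"])

lemma W_nn: "0 \<le> W m t i" unfolding W_def by (intro sum_nonneg mult_nonneg_nonneg cc_nn) auto
lemma ind_nn: "0 \<le> ind m t k" by (simp add: ind_def)

lemma sum_split: "(\<Sum>t<L+N. h t) = (\<Sum>t<L. h t) + (\<Sum>s<N. h (L+s))" for h :: "nat \<Rightarrow> real"
  by (induct N) auto

lemma sum_only:
  fixes g :: "nat \<Rightarrow> 'b::comm_monoid_add"
  assumes "finite A" "B \<subseteq> A" "\<And>k. k \<in> A \<Longrightarrow> k \<notin> B \<Longrightarrow> g k = 0"
  shows "sum g A = sum g B"
  using assms by (intro sum.mono_neutral_right) auto

lemma W_lower:
  assumes "finite D" "inj_on h D" "h ` D \<subseteq> {..<nn} - {0}"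
  shows "W m t 0 + (\<Sum>d\<in>D. W m t (h d)) \<le> (\<Sum>i<nn. W m t i)"
proof -
  have fin: "finite (h ` D)" using assms(1) by simp
  have n0: "0 \<notin> h ` D" using assms(3) by blast
  have sub: "insert 0 (h ` D) \<subseteq> {..<nn}" using assms(3) nn_pos by blast
  have "(\<Sum>d\<in>D. W m t (h d)) = (\<Sum>i\<in>h ` D. W m t i)"
    using assms(2) by (simp add: sum.reindex)
  moreover have "(\<Sum>i\<in>insert 0 (h ` D). W m t i) = W m t 0 + (\<Sum>i\<in>h ` D. W m t i)"
    by (rule sum.insert[OF fin n0])
  moreover have "(\<Sum>i\<in>insert 0 (h ` D). W m t i) \<le> (\<Sum>i<nn. W m t i)"
    by (rule sum_mono2[OF _ sub]) (simp_all add: W_nn)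
  ultimately show ?thesis by simp
qed

lemma feasD:
  assumes "feasible K nn I0 (SS j) m" "t < L+M" "i < nn"
  shows "(\<Sum>k\<le>K. m t k i) = ord j t i"
    and "1 \<le> k \<Longrightarrow> k \<le> K \<Longrightarrow> (\<Sum>\<tau>\<le>t. m \<tau> k i) \<le> I0 k i"
  using assms by (auto simp: feasible_def SS_len SS_nth)

lemma m_le_I0:
  assumes "feasible K nn I0 (SS j) m" "t < L+M" "i < nn" "1 \<le> k" "k \<le> K"
  shows "m t k i \<le> I0 k i"
proof -
  have "m t k i \<le> (\<Sum>\<tau>\<le>t. m \<tau> k i)" by (rule member_le_sum) auto
  also have "\<dots> \<le> I0 k i" using feasD(2)[OF assms(1-3)] assms(4,5) by blast
  finally show ?thesis .
qed

lemma m_zero: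
  assumes "feasible K nn I0 (SS j) m" "t < L+M" "i < nn" "1 \<le> k" "k \<le> K" "I0 k i = 0"
  shows "m t k i = 0"
  using m_le_I0[OF assms(1-5)] assms(6) by simp

lemma ind_pos: "i < nn \<Longrightarrow> 0 < m t k i \<Longrightarrow> ind m t k = 1"
proof -
  assume a: "i < nn" "0 < m t k i"
  have "m t k i \<le> (\<Sum>i<nn. m t k i)" using a by (intro member_le_sum) auto
  then show ?thesis using a by (simp add: ind_def)
qed

lemma W_ge_term: "k \<le> K \<Longrightarrow> cc k i * real (m t k i) \<le> W m t i"
  unfolding W_def by (rule member_le_sum) (auto intro: mult_nonneg_nonneg cc_nn)

lemma filler:
  assumes feas: "feasible K nn I0 (SS j) m" and t: "t < L+M"
  shows "f ks \<le> f ks * ind m t ks + W m t 0"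
proof (cases "0 < m t ks 0")
  case True
  then have "ind m t ks = 1" using ind_pos nn_pos by blast
  then show ?thesis using W_nn[of m t 0] by simp
next
  case False
  have d: "(\<Sum>k\<le>K. m t k 0) = 1" using feasD(1)[OF feas t nn_pos] by (simp add: ord_def)
  have z: "m t k 0 = 0" if "k \<in> {..K}" "k \<notin> {0}" for k
  proof (cases "k = ks")
    case True then show ?thesis using False by simp
  next
    case False
    then show ?thesis using that by (intro m_zero[OF feas t nn_pos]) (auto simp: I0_def)
  qed
  have "(\<Sum>k\<le>K. m t k 0) = (\<Sum>k\<in>{0}. m t k 0)"
    by (rule sum_only) (use z in auto)
  then have m00: "m t 0 0 = 1" using d by simp
  have "cc 0 0 * real (m t 0 0) \<le> W m t 0" by (rule W_ge_term) simp
  then have "FF \<le> W m t 0" using m00 nn_pos by (simp add: cc_def)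
  moreover have "f ks \<le> FF" using f_le_FF ksK by blast
  moreover have "0 \<le> f ks * ind m t ks" using fnn[OF ksK] ind_nn by simp
  ultimately show ?thesis by linarith
qed

lemma ord_bulk: "t < L \<Longrightarrow> g \<le> K \<Longrightarrow> g \<noteq> ks \<Longrightarrow> s < M \<Longrightarrow> ord j t (enc g t s) = 1"
  using enc_dec[of g s t] enc_range[of g s t] by (simp add: ord_def)

lemma ord_trap: "j < L \<Longrightarrow> g \<le> K \<Longrightarrow> g \<noteq> ks \<Longrightarrow> s < M \<Longrightarrow> ord j (L+s) (enc g j s) = 1"
  using enc_dec[of g s j] enc_range[of g s j] by (simp add: ord_def)

lemma bulk:
  assumes feas: "feasible K nn I0 (SS j) m" and t: "t < L" and g: "g \<le> K" "g \<noteq> ks" and s: "s < M"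
  shows "f g / real L * (1 - real (m t ks (enc g t s))) \<le> W m t (enc g t s)"
proof -
  define e where "e = enc g t s"
  have e: "1 \<le> e" "e < nn" "gr e = g" using enc_range[OF g(1) s t] enc_dec[OF g(1) s] by (auto simp: e_def)
  have t2: "t < L + M" using t by simp
  have d: "(\<Sum>k\<le>K. m t k e) = 1" using feasD(1)[OF feas t2 e(2)] ord_bulk[OF t g s] by (simp add: e_def)
  define dd where "dd = f g / real L"
  have ddnn: "0 \<le> dd" using fnn[OF g(1)] by (simp add: dd_def)
  have ddF: "dd \<le> FF"
  proof -
    have L1r: "1 \<le> real L" using L1 by simp
    have "f g \<le> real L * f g" using fnn[OF g(1)] L1r by (simp add: mult_le_cancel_right1)
    then have "dd \<le> f g" using L1r by (simp add: dd_def divide_le_eq mult.commute)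
    then show ?thesis using f_le_FF[OF g(1)] by linarith
  qed
  have pw: "(if k = ks then 0 else dd * real (m t k e)) \<le> cc k e * real (m t k e)" if k: "k \<in> {..K}" for k
  proof (cases "k = ks \<or> m t k e = 0")
    case True then show ?thesis using cc_nn[of k e] by auto
  next
    case False
    then have k1: "k \<noteq> ks" "m t k e \<noteq> 0" by auto
    show ?thesis
    proof (cases "k = 0")
      case True
      have "cc k e = (if g = 0 then f 0 / real L else FF)" using True e g by (simp add: cc_def)
      then have "dd \<le> cc k e" using ddF by (auto simp: dd_def)
      then show ?thesis using k1 by (simp add: mult_right_mono)
    next
      case False
      show ?thesis
      proof (cases "k = g")
        case True
        then have "cc k e = dd" using e g k by (simp add: cc_def dd_def)
        then show ?thesis using k1 by simp
      next
        case False
        have "I0 k e = 0" using False \<open>k \<noteq> 0\<close> k1 e by (simp add: I0_def)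
        then have "m t k e = 0" using m_zero[OF feas t2 e(2), of k] k \<open>k \<noteq> 0\<close> by simp
        then show ?thesis using k1 by simp
      qed
    qed
  qed
  have "(\<Sum>k\<le>K. (if k = ks then 0 else dd * real (m t k e))) = (\<Sum>k\<in>{..K}-{ks}. dd * real (m t k e))"
    by (rule sum.mono_neutral_cong_right) auto
  also have "\<dots> = dd * ((\<Sum>k\<le>K. real (m t k e)) - real (m t ks e))"
    using ksK by (simp add: sum_distrib_left[symmetric] sum_diff1 )
  also have "(\<Sum>k\<le>K. real (m t k e)) = 1" using d by (metis of_nat_1 of_nat_sum)
  finally have "dd * (1 - real (m t ks e)) = (\<Sum>k\<le>K. (if k = ks then 0 else dd * real (m t k e)))" by simp
  also have "\<dots> \<le> W m t e" unfolding W_def by (rule sum_mono) (rule pw)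
  finally show ?thesis by (simp add: dd_def e_def)
qed

lemma trap:
  assumes feas: "feasible K nn I0 (SS j) m" and j: "j < L" and g: "g \<le> K" "g \<noteq> ks" and s: "s < M"
  shows "f g * real (m j ks (enc g j s)) \<le> f g * ind m (L+s) g + W m (L+s) (enc g j s)"
proof -
  define e where "e = enc g j s"
  define t where "t = L + s"
  have e: "1 \<le> e" "e < nn" "gr e = g" using enc_range[OF g(1) s j] enc_dec[OF g(1) s] by (auto simp: e_def)
  have t2: "t < L + M" "j < t" using s j by (auto simp: t_def)
  have j2: "j < L + M" using j by simp
  have nn0: "0 \<le> f g * ind m t g + W m t e" using fnn[OF g(1)] ind_nn W_nn by simp
  have I0e: "I0 ks e = 1" using e g ks1 ksK by (simp add: I0_def)
  have "(\<Sum>\<tau>\<in>{j,t}. m \<tau> ks e) \<le> (\<Sum>\<tau>\<le>t. m \<tau> ks e)"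
    using t2 by (intro sum_mono2) auto
  also have "\<dots> \<le> 1" using feasD(2)[OF feas t2(1) e(2) ks1 ksK] I0e by simp
  finally have inv: "m j ks e + m t ks e \<le> 1" using t2 by simp
  show ?thesis
  proof (cases "m j ks e = 0")
    case True then show ?thesis using nn0 by (simp add: e_def t_def)
  next
    case False
    then have mj: "m j ks e = 1" and mt: "m t ks e = 0" using inv by auto
    have d: "(\<Sum>k\<le>K. m t k e) = 1" using feasD(1)[OF feas t2(1) e(2)] ord_trap[OF j g s] by (simp add: e_def t_def)
    have z: "m t k e = 0" if "k \<in> {..K}" "k \<notin> {0, g}" for k
    proof (cases "k = ks")
      case True then show ?thesis using mt by simp
    next
      case False
      then show ?thesis using that e by (intro m_zero[OF feas t2(1) e(2)]) (auto simp: I0_def)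
    qed
    have key: "f g \<le> f g * ind m t g + W m t e"
    proof (cases "g = 0")
      case True
      have "(\<Sum>k\<le>K. m t k e) = (\<Sum>k\<in>{0}. m t k e)"
        by (rule sum_only) (use z True in auto)
      then have "m t 0 e = 1" using d by simp
      then have "ind m t g = 1" using True ind_pos[OF e(2)] by simp
      then show ?thesis using W_nn[of m t e] by simp
    next
      case False
      have "(\<Sum>k\<le>K. m t k e) = (\<Sum>k\<in>{0,g}. m t k e)"
        by (rule sum_only) (use z g in auto)
      then have sum2: "m t 0 e + m t g e = 1" using d False by simp
      show ?thesis
      proof (cases "0 < m t g e")
        case True
        then have "ind m t g = 1" using ind_pos[OF e(2)] by simp
        then show ?thesis using W_nn[of m t e] by simp
      next
        case False
        then have "m t 0 e = 1" using sum2 by simp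
        moreover have "cc 0 e * real (m t 0 e) \<le> W m t e" by (rule W_ge_term) simp
        moreover have "cc 0 e = FF" using e \<open>g \<noteq> 0\<close> g by (simp add: cc_def)
        ultimately have "FF \<le> W m t e" by simp
        moreover have "0 \<le> f g * ind m t g" using fnn[OF g(1)] ind_nn[of m t g] by simp
        ultimately show ?thesis using f_le_FF[OF g(1)] by linarith
      qed
    qed
    then show ?thesis using mj by (simp add: e_def t_def)
  qed
qed

definition "G = {..K} - {ks}"

lemma G_fin: "finite G" by (simp add: G_def)

lemma G_mem: "g \<in> G \<Longrightarrow> g \<le> K \<and> g \<noteq> ks" by (simp add: G_def)

lemma P_bulk:
  assumes feas: "feasible K nn I0 (SS j) m" and t: "t < L"
  shows "f ks + (\<Sum>g\<in>G. \<Sum>s<M. f g / real L * (1 - real (m t ks (enc g t s)))) \<le> P m t"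
proof -
  have t2: "t < L + M" using t by simp
  define h where "h = (\<lambda>(g,s). enc g t s)"
  have inj: "inj_on h (G \<times> {..<M})"
  proof (rule inj_onI)
    fix x y assume x: "x \<in> G \<times> {..<M}" and y: "y \<in> G \<times> {..<M}" and e: "h x = h y"
    obtain g s where xe: "x = (g,s)" by (cases x)
    obtain g' s' where ye: "y = (g',s')" by (cases y)
    have a: "g \<le> K" "s < M" "g' \<le> K" "s' < M" using x y G_mem xe ye by auto
    have "enc g t s = enc g' t s'" using e xe ye by (simp add: h_def)
    then have "g = g'" "s = s'" using enc_inj[OF a] by auto
    then show "x = y" using xe ye by simp
  qed
  have rng: "h ` (G \<times> {..<M}) \<subseteq> {..<nn} - {0}"
  proof
    fix i assume "i \<in> h ` (G \<times> {..<M})"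
    then obtain g s where gs: "g \<in> G" "s < M" "i = enc g t s" by (auto simp: h_def)
    have "g \<le> K" using G_mem gs by blast
    then show "i \<in> {..<nn} - {0}" using enc_range[of g s t] gs t by auto
  qed
  have "f ks * ind m t ks \<le> (\<Sum>k\<le>K. f k * ind m t k)"
    using ksK by (intro member_le_sum) (auto intro: mult_nonneg_nonneg fnn ind_nn)
  moreover have "W m t 0 + (\<Sum>p\<in>G \<times> {..<M}. W m t (h p)) \<le> (\<Sum>i<nn. W m t i)"
    by (rule W_lower[OF _ inj rng]) (simp add: G_fin)
  moreover have "(\<Sum>p\<in>G \<times> {..<M}. W m t (h p)) = (\<Sum>g\<in>G. \<Sum>s<M. W m t (enc g t s))"
    unfolding h_def sum.cartesian_product by (intro sum.cong) auto
  moreover have "(\<Sum>g\<in>G. \<Sum>s<M. f g / real L * (1 - real (m t ks (enc g t s)))) \<le> (\<Sum>g\<in>G. \<Sum>s<M. W m t (enc g t s))"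
  proof (intro sum_mono)
    fix g s assume "g \<in> G" "s \<in> {..<M}"
    then show "f g / real L * (1 - real (m t ks (enc g t s))) \<le> W m t (enc g t s)"
      using bulk[OF feas t] G_mem by blast
  qed
  moreover have "f ks \<le> f ks * ind m t ks + W m t 0" by (rule filler[OF feas t2])
  ultimately show ?thesis unfolding P_eq by linarith
qed

lemma P_trap:
  assumes feas: "feasible K nn I0 (SS j) m" and j: "j < L" and s: "s < M"
  shows "f ks + (\<Sum>g\<in>G. f g * real (m j ks (enc g j s))) \<le> P m (L+s)"
proof -
  have t2: "L + s < L + M" using s by simp
  let ?h = "\<lambda>g. enc g j s"
  have inj: "inj_on ?h G"
  proof (rule inj_onI)
    fix g g' assume "g \<in> G" "g' \<in> G" "enc g j s = enc g' j s"
    then show "g = g'" using enc_inj[OF _ s _ s] G_mem by blast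
  qed
  have rng: "?h ` G \<subseteq> {..<nn} - {0}"
  proof
    fix i assume "i \<in> ?h ` G"
    then obtain g where g: "g \<in> G" "i = enc g j s" by auto
    have "g \<le> K" using G_mem g by blast
    then show "i \<in> {..<nn} - {0}" using enc_range[of g s j] g s j by auto
  qed
  have fs: "(\<Sum>k\<le>K. f k * ind m (L+s) k) = f ks * ind m (L+s) ks + (\<Sum>g\<in>G. f g * ind m (L+s) g)"
    unfolding G_def using ksK by (subst sum.remove[of _ ks]) simp_all
  have "W m (L+s) 0 + (\<Sum>g\<in>G. W m (L+s) (?h g)) \<le> (\<Sum>i<nn. W m (L+s) i)"
    by (rule W_lower[OF G_fin inj rng])
  moreover have "(\<Sum>g\<in>G. f g * real (m j ks (enc g j s))) \<le> (\<Sum>g\<in>G. f g * ind m (L+s) g + W m (L+s) (enc g j s))"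
  proof (intro sum_mono)
    fix g assume "g \<in> G"
    then show "f g * real (m j ks (enc g j s)) \<le> f g * ind m (L+s) g + W m (L+s) (enc g j s)"
      using trap[OF feas j _ _ s] G_mem by blast
  qed
  moreover have "f ks \<le> f ks * ind m (L+s) ks + W m (L+s) 0" by (rule filler[OF feas t2])
  ultimately show ?thesis unfolding P_eq fs sum.distrib by linarith
qed

lemma alg_lower:
  assumes feas: "feasible K nn I0 (SS j) m" and j: "j < L"
  shows "real (L+M) * f ks + (\<Sum>t<L. \<Sum>g\<in>G. \<Sum>s<M. f g / real L * (1 - real (m t ks (enc g t s))))
          + (\<Sum>s<M. \<Sum>g\<in>G. f g * real (m j ks (enc g j s))) \<le> total_cost K f cc nn (L+M) m"
proof -
  have "(\<Sum>t<L. f ks + (\<Sum>g\<in>G. \<Sum>s<M. f g / real L * (1 - real (m t ks (enc g t s))))) \<le> (\<Sum>t<L. P m t)"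
    by (intro sum_mono P_bulk[OF feas]) auto
  moreover have "(\<Sum>s<M. f ks + (\<Sum>g\<in>G. f g * real (m j ks (enc g j s)))) \<le> (\<Sum>s<M. P m (L+s))"
    by (intro sum_mono P_trap[OF feas j]) auto
  moreover have "total_cost K f cc nn (L+M) m = (\<Sum>t<L. P m t) + (\<Sum>s<M. P m (L+s))"
    unfolding tc_eq by (rule sum_split)
  moreover have "real (L+M) * f ks = real L * f ks + real M * f ks" by (simp add: distrib_right)
  moreover have "(\<Sum>t<L. f ks + (\<Sum>g\<in>G. \<Sum>s<M. f g / real L * (1 - real (m t ks (enc g t s)))))
     = real L * f ks + (\<Sum>t<L. \<Sum>g\<in>G. \<Sum>s<M. f g / real L * (1 - real (m t ks (enc g t s))))"
    by (simp only: sum.distrib sum_constant card_lessThan)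
  moreover have "(\<Sum>s<M. f ks + (\<Sum>g\<in>G. f g * real (m j ks (enc g j s))))
     = real M * f ks + (\<Sum>s<M. \<Sum>g\<in>G. f g * real (m j ks (enc g j s)))"
    by (simp only: sum.distrib sum_constant card_lessThan)
  ultimately show ?thesis by linarith
qed

definition dest :: "nat \<Rightarrow> nat \<Rightarrow> nat \<Rightarrow> nat" where
  "dest j t i = (if i \<noteq> 0 \<and> t = j then gr i else ks)"
definition mo :: "nat \<Rightarrow> nat \<Rightarrow> decision" where
  "mo j t k i = (if k = dest j t i then ord j t i else 0)"

lemma dest_le: "dest j t i \<le> K" using gr_le ksK by (simp add: dest_def)
lemma ord_le1: "ord j t i \<le> 1" by (simp add: ord_def)

lemma sum_le1:
  fixes h :: "nat \<Rightarrow> nat"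
  assumes "\<And>\<tau>. \<tau> \<noteq> \<tau>0 \<Longrightarrow> h \<tau> = 0" "\<And>\<tau>. h \<tau> \<le> 1"
  shows "(\<Sum>\<tau>\<le>t. h \<tau>) \<le> 1"
proof -
  have "(\<Sum>\<tau>\<le>t. h \<tau>) \<le> (\<Sum>\<tau>\<le>t. (if \<tau> = \<tau>0 then 1 else 0))"
    by (intro sum_mono) (use assms in auto)
  also have "\<dots> \<le> 1" by (simp add: sum.delta)
  finally show ?thesis .
qed

lemma opt_inv:
  assumes j: "j < L" and t: "t < L + M" and i: "i < nn" and k: "1 \<le> k" "k \<le> K"
  shows "(\<Sum>\<tau>\<le>t. mo j \<tau> k i) \<le> I0 k i"
proof (cases "i = 0")
  case True
  have "(\<Sum>\<tau>\<le>t. mo j \<tau> k i) = (\<Sum>\<tau>\<le>t. (if k = ks then 1 else 0))"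
    using True by (intro sum.cong) (auto simp: mo_def dest_def ord_def)
  also have "\<dots> = (if k = ks then Suc t else 0)" by simp
  also have "\<dots> \<le> I0 k i" using True t k i by (simp add: I0_def)
  finally show ?thesis .
next
  case False
  show ?thesis
  proof (cases "gr i = ks")
    case True
    then have "mo j \<tau> k i = 0" for \<tau> using False by (simp add: mo_def ord_def)
    then show ?thesis by simp
  next
    case gne: False
    show ?thesis
    proof (cases "k = ks \<or> k = gr i")
      case False
      then have "mo j \<tau> k i = 0" for \<tau> by (auto simp: mo_def dest_def)
      then show ?thesis by simp
    next
      case True
      then have I1: "I0 k i = 1" using gne False k i by (auto simp: I0_def)
      define \<tau>0 where "\<tau>0 = (if k = ks then (if bl i = j then L + sl i else bl i) else j)"
      have z: "mo j \<tau> k i = 0" if "\<tau> \<noteq> \<tau>0" for \<tau>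
      proof (cases "k = ks")
        case True
        then show ?thesis using that gne False sl_lt[of i]
          by (auto simp: mo_def dest_def ord_def \<tau>0_def split: if_splits)
      next
        case kne: False
        then have "k = gr i" using \<open>k = ks \<or> k = gr i\<close> by simp
        then show ?thesis using that kne gne False
          by (auto simp: mo_def dest_def \<tau>0_def)
      qed
      have "(\<Sum>\<tau>\<le>t. mo j \<tau> k i) \<le> 1"
        by (rule sum_le1[of \<tau>0]) (use z ord_le1 in \<open>auto simp: mo_def\<close>)
      then show ?thesis using I1 by simp
    qed
  qed
qed

lemma opt_feas: assumes j: "j < L" shows "feasible K nn I0 (SS j) (mo j)"
  unfolding feasible_def SS_len
proof (intro allI impI conjI ballI)
  fix t i assume t: "t < L + M" and i: "i < nn"
  have "(\<Sum>k\<le>K. mo j t k i) = (if dest j t i \<in> {..K} then ord j t i else 0)"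
    unfolding mo_def by (rule sum.delta) simp
  then show "(\<Sum>k\<le>K. mo j t k i) = (SS j ! t) i" using dest_le SS_nth[OF t] by simp
next
  fix t i k assume t: "t < L + M" and i: "i < nn" and k: "k \<in> {1..K}"
  then show "(\<Sum>\<tau>\<le>t. mo j \<tau> k i) \<le> I0 k i" using opt_inv[OF j t i] by auto
qed

lemma ind_le1: "ind m t k \<le> 1" by (simp add: ind_def)

lemma cc_ks: "cc ks i = 0" using ks1 by (simp add: cc_def)

lemma P_mo_other:
  assumes "t \<noteq> j"
  shows "P (mo j) t \<le> f ks"
proof -
  have "f k * ind (mo j) t k + (\<Sum>i<nn. cc k i * real (mo j t k i)) \<le> (if k = ks then f ks else 0)"
    if "k \<le> K" for k
  proof (cases "k = ks")
    case True
    have "f k * ind (mo j) t k \<le> f k" using fnn[OF that] ind_le1 ind_nn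
      by (simp add: mult_left_le)
    then show ?thesis using True by (simp add: cc_ks)
  next
    case False
    then have "mo j t k i = 0" for i using assms by (simp add: mo_def dest_def)
    then show ?thesis using False by (simp add: ind_def)
  qed
  then have "P (mo j) t \<le> (\<Sum>k\<le>K. (if k = ks then f ks else 0))"
    unfolding P_def by (intro sum_mono) simp
  also have "\<dots> = f ks" using ksK by (simp add: sum.delta)
  finally show ?thesis .
qed

lemma card_block: "card {i\<in>{..<nn}. i \<noteq> 0 \<and> bl i = j} \<le> Q"
proof -
  have "{i\<in>{..<nn}. i \<noteq> 0 \<and> bl i = j} \<subseteq> (\<lambda>x. x + 1) ` {Q*j..<Q*j+Q}"
  proof
    fix i assume "i \<in> {i\<in>{..<nn}. i \<noteq> 0 \<and> bl i = j}"
    then have i: "i \<noteq> 0" "(i - 1) div Q = j" by (auto simp: bl_def)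
    have A: "Q * ((i - 1) div Q) \<le> i - 1" by (rule times_div_less_eq_dividend)
    then have "Q * j \<le> i - 1" unfolding i(2) .
    moreover have "i - 1 < Q * ((i - 1) div Q) + Q" using Qpos
      by (metis add.commute div_mult_mod_eq mod_less_divisor mult.commute nat_add_left_cancel_less)
    ultimately have "i - 1 \<in> {Q*j..<Q*j+Q}" using i by simp
    then show "i \<in> (\<lambda>x. x + 1) ` {Q*j..<Q*j+Q}" using i by (intro image_eqI[of _ _ "i - 1"]) auto
  qed
  then have "card {i\<in>{..<nn}. i \<noteq> 0 \<and> bl i = j} \<le> card ((\<lambda>x. x + 1) ` {Q*j..<Q*j+Q})"
    by (intro card_mono) auto
  also have "\<dots> \<le> card {Q*j..<Q*j+Q}" by (rule card_image_le) simp
  finally show ?thesis by simp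
qed

lemma P_mo_j:
  shows "P (mo j) j \<le> FF + real Q * FF / real L"
proof -
  have a: "(\<Sum>k\<le>K. f k * ind (mo j) j k) \<le> FF"
    unfolding FF_def by (intro sum_mono) (use fnn ind_le1 ind_nn in \<open>auto simp: mult_left_le\<close>)
  have w: "W (mo j) j i \<le> (if i \<in> {i\<in>{..<nn}. i \<noteq> 0 \<and> bl i = j} then FF / real L else 0)" if "i < nn" for i
  proof -
    have "W (mo j) j i = cc (dest j j i) i * real (ord j j i)"
      unfolding W_def mo_def using dest_le by (simp add: sum.delta' if_distrib[of real] if_distrib[of "(*) _"] cong: if_cong)
    also have "\<dots> \<le> (if i \<in> {i\<in>{..<nn}. i \<noteq> 0 \<and> bl i = j} then FF / real L else 0)"
    proof (cases "i = 0")
      case True then show ?thesis by (simp add: dest_def cc_ks)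
    next
      case False
      show ?thesis
      proof (cases "ord j j i = 1")
        case True
        then have g: "gr i \<noteq> ks" "bl i = j" using False that by (auto simp: ord_def split: if_splits)
        have "cc (gr i) i \<le> FF / real L"
        proof -
          have "cc (gr i) i = f (gr i) / real L" using False that g gr_le
            by (auto simp: cc_def)
          also have "\<dots> \<le> FF / real L" using f_le_FF[OF gr_le] by (simp add: divide_right_mono)
          finally show ?thesis .
        qed
        then show ?thesis using True False g that by (simp add: dest_def)
      next
        case False2: False
        then have "ord j j i = 0" using ord_le1[of j j i] by simp
        then show ?thesis using False2 FF_nn by simp
      qed
    qed
    finally show ?thesis .
  qed
  have "(\<Sum>i<nn. W (mo j) j i) \<le> (\<Sum>i<nn. (if i \<in> {i\<in>{..<nn}. i \<noteq> 0 \<and> bl i = j} then FF / real L else 0))"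
    by (intro sum_mono w) simp
  also have "\<dots> = real (card {i\<in>{..<nn}. i \<noteq> 0 \<and> bl i = j}) * (FF / real L)"
    by (simp add: sum.If_cases Int_absorb1 Int_def)
  also have "\<dots> \<le> real Q * (FF / real L)"
    using card_block FF_nn L1 by (intro mult_right_mono) auto
  finally show ?thesis using a unfolding P_eq by simp
qed

lemma opt_cost:
  assumes j: "j < L"
  shows "total_cost K f cc nn (L+M) (mo j) \<le> real (L+M) * f ks + FF + real Q * FF / real L"
proof -
  have "P (mo j) t \<le> f ks + (if t = j then FF + real Q * FF / real L else 0)" for t
  proof (cases "t = j")
    case True then show ?thesis using P_mo_j[of j] fnn[OF ksK] unfolding True by simp
  next
    case False then show ?thesis using P_mo_other by simp
  qed
  then have "total_cost K f cc nn (L+M) (mo j) \<le> (\<Sum>t<L+M. f ks + (if t = j then FF + real Q * FF / real L else 0))"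
    unfolding tc_eq by (intro sum_mono) simp
  also have "\<dots> = real (L+M) * f ks + FF + real Q * FF / real L"
    using j by (simp add: sum.distrib sum.delta)
  finally show ?thesis .
qed

lemma P_nn: "0 \<le> P m t"
  unfolding P_def by (intro sum_nonneg add_nonneg_nonneg mult_nonneg_nonneg fnn ind_nn cc_nn) auto

lemma tc_nn: "0 \<le> total_cost K f cc nn T m"
  unfolding tc_eq by (intro sum_nonneg P_nn)

lemma OPT_bounds:
  assumes j: "j < L"
  shows "OPT K f nn I0 cc (SS j) \<le> real (L+M) * f ks + FF + real Q * FF / real L"
    and "0 \<le> OPT K f nn I0 cc (SS j)"
proof -
  let ?X = "{total_cost K f cc nn (length (SS j)) m | m. feasible K nn I0 (SS j) m}"
  have mem: "total_cost K f cc nn (L+M) (mo j) \<in> ?X" using opt_feas[OF j] SS_len by auto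
  have bdd: "bdd_below ?X" by (rule bdd_belowI[of _ 0]) (auto intro: tc_nn)
  have "OPT K f nn I0 cc (SS j) \<le> total_cost K f cc nn (L+M) (mo j)"
    unfolding OPT_def by (rule cInf_lower[OF mem bdd])
  then show "OPT K f nn I0 cc (SS j) \<le> real (L+M) * f ks + FF + real Q * FF / real L"
    using opt_cost[OF j] by linarith
  show "0 \<le> OPT K f nn I0 cc (SS j)"
    unfolding OPT_def using mem by (intro cInf_greatest) (auto intro: tc_nn)
qed

lemma alg_lower':
  assumes feas: "feasible K nn I0 (SS j) m" and j: "j < L" and eq: "\<And>t. t < L \<Longrightarrow> m t = m0 t"
  shows "real (L+M) * f ks + (\<Sum>t<L. \<Sum>g\<in>G. \<Sum>s<M. f g / real L * (1 - real (m0 t ks (enc g t s))))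
          + (\<Sum>s<M. \<Sum>g\<in>G. f g * real (m0 j ks (enc g j s))) \<le> total_cost K f cc nn (L+M) m"
proof -
  have "(\<Sum>t<L. \<Sum>g\<in>G. \<Sum>s<M. f g / real L * (1 - real (m0 t ks (enc g t s))))
      = (\<Sum>t<L. \<Sum>g\<in>G. \<Sum>s<M. f g / real L * (1 - real (m t ks (enc g t s))))"
    by (intro sum.cong refl) (simp add: eq)
  moreover have "(\<Sum>s<M. \<Sum>g\<in>G. f g * real (m0 j ks (enc g j s))) = (\<Sum>s<M. \<Sum>g\<in>G. f g * real (m j ks (enc g j s)))"
    using eq[OF j] by simp
  ultimately show ?thesis using alg_lower[OF feas j] by simp
qed

lemma sum_G: "(\<Sum>g\<in>G. f g) = FF - f ks"
proof -
  have "FF = f ks + (\<Sum>g\<in>G. f g)" unfolding FF_def G_def using ksK by (subst sum.remove[of _ ks]) simp_all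
  then show ?thesis by simp
qed

lemma avg_identity:
  fixes X :: "nat \<Rightarrow> nat \<Rightarrow> nat \<Rightarrow> real" and c :: real
  shows "(\<Sum>j<L. c + (\<Sum>t<L. \<Sum>g\<in>G. \<Sum>s<M. f g / real L * (1 - X t g s)) + (\<Sum>s<M. \<Sum>g\<in>G. f g * X j g s))
       = real L * (c + real M * (\<Sum>g\<in>G. f g))"
proof -
  have L0: "real L \<noteq> 0" using L1 by simp
  have A: "real L * (\<Sum>t<L. \<Sum>g\<in>G. \<Sum>s<M. f g / real L * (1 - X t g s)) = (\<Sum>t<L. \<Sum>g\<in>G. \<Sum>s<M. f g * (1 - X t g s))"
    unfolding sum_distrib_left using L0 by (intro sum.cong refl) simp
  have B: "(\<Sum>j<L. \<Sum>s<M. \<Sum>g\<in>G. f g * X j g s) = (\<Sum>t<L. \<Sum>g\<in>G. \<Sum>s<M. f g * X t g s)"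
  proof (rule sum.cong[OF refl])
    fix j show "(\<Sum>s<M. \<Sum>g\<in>G. f g * X j g s) = (\<Sum>g\<in>G. \<Sum>s<M. f g * X j g s)" by (rule sum.swap)
  qed
  have C: "(\<Sum>t<L. \<Sum>g\<in>G. \<Sum>s<M. f g * (1 - X t g s)) + (\<Sum>t<L. \<Sum>g\<in>G. \<Sum>s<M. f g * X t g s)
       = (\<Sum>t<L. \<Sum>g\<in>G. \<Sum>s<M. f g)"
    unfolding sum.distrib[symmetric] by (intro sum.cong refl) (simp add: algebra_simps)
  have D: "(\<Sum>t<L. \<Sum>g\<in>G. \<Sum>s<M. f g) = real L * (real M * (\<Sum>g\<in>G. f g))"
    by (simp add: sum_distrib_left mult.commute)
  have "(\<Sum>j<L. c + (\<Sum>t<L. \<Sum>g\<in>G. \<Sum>s<M. f g / real L * (1 - X t g s)) + (\<Sum>s<M. \<Sum>g\<in>G. f g * X j g s))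
     = real L * c + real L * (\<Sum>t<L. \<Sum>g\<in>G. \<Sum>s<M. f g / real L * (1 - X t g s)) + (\<Sum>j<L. \<Sum>s<M. \<Sum>g\<in>G. f g * X j g s)"
    by (simp add: sum.distrib distrib_left)
  also have "\<dots> = real L * (c + real M * (\<Sum>g\<in>G. f g))" unfolding A B
    using C D by (simp add: algebra_simps)
  finally show ?thesis .
qed

lemma run_prefix:
  assumes "t < L"
  shows "run p nn I0 cc (SS j) t = run p nn I0 cc (SS 0) t"
proof -
  have "take (Suc t) (SS j) = map (ord j) [0..<Suc t]" using assms
    by (simp add: SS_def take_map del: upt_Suc)
  also have "\<dots> = map (ord 0) [0..<Suc t]"
    using assms by (intro map_cong refl) (auto simp: ord_def fun_eq_iff)
  also have "\<dots> = take (Suc t) (SS 0)" using assms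
    by (simp add: SS_def take_map del: upt_Suc)
  finally have eq: "take (Suc t) (SS j) = take (Suc t) (SS 0)" .
  show ?thesis by (simp only: run_def eq)
qed

definition "BB j = (\<Sum>t<L+M. \<Sum>k\<le>K. f k + (\<Sum>i<nn. cc k i * real (ord j t i)))"

lemma tc_upper:
  assumes feas: "feasible K nn I0 (SS j) m"
  shows "total_cost K f cc nn (L+M) m \<le> BB j"
  unfolding tc_eq BB_def P_def
proof (rule sum_mono, rule sum_mono, rule add_mono)
  fix t k assume t: "t \<in> {..<L+M}" and k: "k \<in> {..K}"
  show "f k * ind m t k \<le> f k" using fnn k ind_le1 ind_nn by (simp add: mult_left_le)
  show "(\<Sum>i<nn. cc k i * real (m t k i)) \<le> (\<Sum>i<nn. cc k i * real (ord j t i))"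
  proof (rule sum_mono)
    fix i assume i: "i \<in> {..<nn}"
    have "m t k i \<le> (\<Sum>k\<le>K. m t k i)" using k by (intro member_le_sum) auto
    then have "real (m t k i) \<le> real (ord j t i)" using feasD(1)[OF feas _ _] t i by simp
    then show "cc k i * real (m t k i) \<le> cc k i * real (ord j t i)" by (rule mult_left_mono) (rule cc_nn)
  qed
qed

lemma exists_bad:
  assumes rp: "randomized_policy K f Mw pol"
  shows "\<exists>j<L. real (L+M) * f ks + real M * (FF - f ks) \<le> ALG K f Mw pol nn I0 cc (SS j)"
proof (rule ccontr)
  assume neg: "\<not> ?thesis"
  interpret prob_space Mw using rp by (simp add: randomized_policy_def)
  define pc where "pc j \<omega> = pol_cost K f (pol \<omega>) nn I0 cc (SS j)" for j \<omega>
  have feasw: "feasible K nn I0 (SS j) (run (pol \<omega>) nn I0 cc (SS j))" if "\<omega> \<in> space Mw" for j \<omega>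
    using rp that valid by (simp add: randomized_policy_def)
  have pc_eq: "pc j \<omega> = total_cost K f cc nn (L+M) (run (pol \<omega>) nn I0 cc (SS j))" for j \<omega>
    by (simp add: pc_def pol_cost_def SS_len)
  have integ: "integrable Mw (pc j)" for j
  proof (rule integrable_const_bound[where B="BB j"])
    show "AE x in Mw. norm (pc j x) \<le> BB j"
    proof (rule AE_I2)
      fix x assume "x \<in> space Mw"
      then show "norm (pc j x) \<le> BB j" using tc_upper[OF feasw] tc_nn pc_eq by simp
    qed
    have "(\<lambda>\<omega>. pol_cost K f (pol \<omega>) nn I0 cc (SS j)) \<in> borel_measurable Mw"
      using rp valid by (simp add: randomized_policy_def)
    then show "pc j \<in> borel_measurable Mw" by (simp add: pc_def[abs_def])
  qed
  define aL where "aL = real (L+M) * f ks + real M * (FF - f ks)"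
  define X where "X \<omega> t g s = real (run (pol \<omega>) nn I0 cc (SS 0) t ks (enc g t s))" for \<omega> t g s
  have low: "real L * aL \<le> (\<Sum>j<L. pc j \<omega>)" if w: "\<omega> \<in> space Mw" for \<omega>
  proof -
    have "(\<Sum>j<L. real (L+M) * f ks + (\<Sum>t<L. \<Sum>g\<in>G. \<Sum>s<M. f g / real L * (1 - X \<omega> t g s))
          + (\<Sum>s<M. \<Sum>g\<in>G. f g * X \<omega> j g s)) \<le> (\<Sum>j<L. pc j \<omega>)"
    proof (rule sum_mono)
      fix j assume j: "j \<in> {..<L}"
      show "real (L+M) * f ks + (\<Sum>t<L. \<Sum>g\<in>G. \<Sum>s<M. f g / real L * (1 - X \<omega> t g s))
          + (\<Sum>s<M. \<Sum>g\<in>G. f g * X \<omega> j g s) \<le> pc j \<omega>"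
        unfolding pc_eq X_def
        by (rule alg_lower'[OF feasw[OF w]]) (use j in \<open>auto intro!: run_prefix\<close>)
    qed
    then show ?thesis unfolding avg_identity sum_G aL_def .
  qed
  have "real L * aL = (\<integral>\<omega>. real L * aL \<partial>Mw)" by (simp add: prob_space)
  also have "\<dots> \<le> (\<integral>\<omega>. (\<Sum>j<L. pc j \<omega>) \<partial>Mw)"
    by (rule integral_mono) (use integ low in auto)
  also have "\<dots> = (\<Sum>j<L. (\<integral>\<omega>. pc j \<omega> \<partial>Mw))" by (rule Bochner_Integration.integral_sum) (use integ in auto)
  also have "\<dots> < (\<Sum>j<L. aL)"
  proof (rule sum_strict_mono)
    show "{..<L} \<noteq> {}" using L1 by (auto simp: lessThan_empty_iff)
    fix j assume "j \<in> {..<L}"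
    then show "(\<integral>\<omega>. pc j \<omega> \<partial>Mw) < aL" using neg by (auto simp: aL_def ALG_def pc_def not_le)
  qed simp
  also have "\<dots> = real L * aL" by simp
  finally show False by simp
qed

lemma choose_ok:
  assumes fs: "0 < f ks" and y: "y < FF / f ks"
    and Lbig: "y * f ks + y * real (K+1) * FF + y * FF < real L * (FF - y * f ks)"
  shows "y * (real (L+M) * f ks + FF + real Q * FF / real L) < real (L+M) * f ks + real M * (FF - f ks)"
proof -
  define x where "x = real L"
  have x1: "1 \<le> x" using L1 by (simp add: x_def)
  have rM: "real M = x * x" by (simp add: M_def x_def)
  have rQ: "real Q * FF / real L = real (K+1) * x * FF"
  proof -
    have xn: "x \<noteq> 0" using x1 by simp
    have "real Q = real (K+1) * x * x" by (simp add: Q_def M_def x_def algebra_simps)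
    then have "real Q * FF / real L = (real (K+1) * x * FF) * x / x" by (simp add: x_def algebra_simps)
    also have "\<dots> = real (K+1) * x * FF" using xn by simp
    finally show ?thesis .
  qed
  have rLM: "real (L+M) = x + x * x" using rM by (simp add: x_def)
  have R: "real (L+M) * f ks + real M * (FF - f ks) = x * f ks + x * x * FF"
    unfolding rLM rM by (simp add: algebra_simps)
  have Bnn: "0 \<le> real (L+M) * f ks + FF + real Q * FF / real L"
    using fs FF_nn by (intro add_nonneg_nonneg mult_nonneg_nonneg divide_nonneg_nonneg) auto
  show ?thesis
  proof (cases "y \<le> 0")
    case True
    have "y * (real (L+M) * f ks + FF + real Q * FF / real L) \<le> 0"
      using True Bnn by (simp add: mult_nonpos_nonneg)
    moreover have "0 < x * f ks + x * x * FF" using x1 fs FF_nn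
      by (intro add_pos_nonneg mult_pos_pos mult_nonneg_nonneg) auto
    ultimately show ?thesis unfolding R by linarith
  next
    case False
    then have yp: "0 < y" by simp
    define D where "D = y * f ks + y * real (K+1) * FF + y * FF"
    have "x * D < x * (x * (FF - y * f ks))"
      using Lbig x1 by (intro mult_strict_left_mono) (auto simp: D_def x_def)
    moreover have "y * FF \<le> x * (y * FF)" using mult_right_mono[OF x1, of "y*FF"] yp FF_nn by simp
    moreover have "0 \<le> x * f ks" using x1 fs by simp
    ultimately have "y * ((x + x * x) * f ks + FF + real (K+1) * x * FF) < x * f ks + x * x * FF"
      unfolding D_def by (simp add: algebra_simps)
    then show ?thesis using R unfolding rQ rLM by simp
  qed
qed

end

lemma FF_split: "(\<Sum>k\<le>K. f k) = f 0 + (\<Sum>k\<in>{1..K}. f k)" for f :: "nat \<Rightarrow> real"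
  by (simp add: atMost_atLeast0 sum.atLeast_Suc_atMost)

theorem theorem4:
  fixes K :: nat and f :: "nat \<Rightarrow> real"
    and M :: "'w measure" and pol :: "'w \<Rightarrow> policy"
  assumes "1 \<le> K"
    and "0 \<le> f 0"
    and "\<forall>k\<in>{1..K}. 0 < f k"
    and "randomized_policy K f M pol"
  shows "R_inv K f M pol \<ge> ereal ((f 0 + (\<Sum>k\<in>{1..K}. f k)) / Min (f ` {1..K}))"
proof -
  have ne: "f ` {1..K} \<noteq> {}" using assms(1) by auto
  have "Min (f ` {1..K}) \<in> f ` {1..K}" using ne by (intro Min_in) auto
  then obtain ks where ks: "ks \<in> {1..K}" "f ks = Min (f ` {1..K})" by auto
  have fnn: "0 \<le> f k" if "k \<le> K" for k
    using assms(2,3) that by (cases "k = 0") (auto simp: less_imp_le)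
  have fs: "0 < f ks" using assms(3) ks by auto
  define FF where "FF = (\<Sum>k\<le>K. f k)"
  have FFe: "f 0 + (\<Sum>k\<in>{1..K}. f k) = FF" unfolding FF_def by (simp add: FF_split)
  have main: "ereal y \<le> R_inv K f M pol" if y: "y < FF / f ks" for y
  proof -
    define c2 where "c2 = FF - y * f ks"
    have c2: "0 < c2" using y fs by (simp add: c2_def field_simps)
    define D where "D = y * f ks + y * real (K+1) * FF + y * FF"
    define L where "L = nat (ceiling (D / c2)) + 1"
    have L1: "1 \<le> L" by (simp add: L_def)
    have "D / c2 < real L" unfolding L_def by linarith
    then have Lbig: "D < real L * c2" using c2 by (simp add: divide_less_eq)
    interpret C: cx K ks L f
      by unfold_locales (use ks L1 fnn in auto)
    have FFC: "C.FF = FF" by (simp add: C.FF_def FF_def)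
    obtain j where j: "j < L"
      and alg: "real (L+C.M) * f ks + real C.M * (FF - f ks) \<le> ALG K f M pol C.nn C.I0 C.cc (C.SS j)"
      using C.exists_bad[OF assms(4)] FFC by auto
    define A where "A = ALG K f M pol C.nn C.I0 C.cc (C.SS j)"
    define Opt where "Opt = OPT K f C.nn C.I0 C.cc (C.SS j)"
    define aL where "aL = real (L+C.M) * f ks + real C.M * (FF - f ks)"
    define bL where "bL = real (L+C.M) * f ks + FF + real C.Q * FF / real L"
    have Ob: "Opt \<le> bL" "0 \<le> Opt" using C.OPT_bounds[OF j] FFC by (auto simp: Opt_def bL_def)
    have ch: "y * bL < aL"
      using C.choose_ok[OF fs] y Lbig FFC by (auto simp: aL_def bL_def D_def c2_def)
    have aLpos: "0 < aL"
    proof -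
      have "FF - f ks \<ge> 0" using C.f_le_FF[of ks] ks FFC by auto
      moreover have "0 < real (L + C.M) * f ks" using fs L1 by simp
      ultimately show ?thesis unfolding aL_def by (simp add: add_pos_nonneg)
    qed
    have Ag: "aL \<le> A" using alg by (simp add: aL_def A_def)
    have rat: "ereal y \<le> ratio A Opt"
    proof (cases "Opt = 0")
      case True
      then show ?thesis using Ag aLpos by (simp add: ratio_def)
    next
      case False
      then have Opp: "0 < Opt" using Ob by simp
      have "y < aL / bL" using ch Opp Ob by (simp add: less_divide_eq)
      also have "aL / bL \<le> aL / Opt" using aLpos Opp Ob by (intro divide_left_mono) auto
      also have "aL / Opt \<le> A / Opt" using Ag Opp by (simp add: divide_right_mono)
      finally show ?thesis using False by (simp add: ratio_def)
    qed
    have "ratio A Opt \<le> R_inv K f M pol"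
      unfolding R_inv_def A_def Opt_def
      by (rule SUP_upper2[of "(C.nn, C.I0, C.cc, C.SS j)"]) (auto simp: C.valid)
    then show ?thesis using rat by simp
  qed
  have "ereal (FF / f ks) \<le> R_inv K f M pol"
  proof (rule dense_le)
    fix z assume z: "z < ereal (FF / f ks)"
    show "z \<le> R_inv K f M pol"
    proof (cases z)
      case (real y) then show ?thesis using z main by simp
    next
      case PInf then show ?thesis using z by simp
    next
      case MInf then show ?thesis by simp
    qed
  qed
  then show ?thesis using FFe ks by simp
qed

end
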